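(* Let $l\ge1$, $m=2l$, and consider the $[[2^{2l},l+1,2^l]]$ phantom quantum Reed–Muller code, with logical states $|c\rangle_L\propto\sum_{s\in\mathrm{rs}(H_X)}|cL_X+s\rangle$ for $c\in\mathbb F_2^{l+1}$, where the rows of $L_X$ are $\mathrm{ev}(x_1\cdots x_{l-1}x_j)$ for $j=l,l+1,\dots,2l$ in this order. For an involution $\tau$ of $\mathbb F_2^{2l}$ let $F_\tau$ be the diagonal circuit applying $S=\mathrm{diag}(1,i)$ to every qubit $a$ with $\tau(a)=a$ and $\mathrm{CZ}$ to every pair $\{a,\tau(a)\}$ with $\tau(a)\neq a$. (a) Let $\tau_{SS}(a)_i=a_{2l+1-i}+1$ for $i\in[2l]$. Then $F_{\tau_{SS}}$ preserves the codespace and $F_{\tau_{SS}}|c\rangle_L=i^{c_1+c_2}|c\rangle_L$ for all $c$ (logical $S\otimes S$ on logical qubits 1 and 2, identity on the others). (b) Let $\tau_{CZ}(a)_i=a_{2l+1-i}+1$ for $i\in[2l]\setminus\{l,l+1\}$, $\tau_{CZ}(a)_l=a_l+1$, $\tau_{CZ}(a)_{l+1}=a_{l+1}+1$. Then $F_{\tau_{CZ}}$ preserves the codespace and $F_{\tau_{CZ}}|c\rangle_L=(-1)^{c_1c_2}|c\rangle_L$ for all $c$ (logical CZ between logical qubits 1 and 2).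
   Context: Coordinates of $2^{2l}$ qubits are identified with $\mathbb F_2^{2l}$; $\mathrm{ev}(f)=(f(a))_{a\in\mathbb F_2^{2l}}$ for Boolean polynomials $f$; $\mathrm{RM}(r,m)$ is the span of evaluation vectors of monomials of degree $\le r$ ($\{0\}$ if $r<0$). For $S\subseteq[m]$, $x_S=\prod_{i\in S}x_i$ and $\hat x_S=\prod_{i\notin S}(1+x_i)$. The phantom qRM code (here with $m=2l$) is the CSS code with $\mathrm{rs}(H_X)=\mathrm{RM}(l-1,m)$ and $\mathrm{rs}(H_Z)=\mathrm{RM}(m-l-1,m)+\mathrm{span}\{\mathrm{ev}(\hat x_S):|S|=l,\ S\ne\{1,\dots,l-1,j\}\text{ for all }j\in\{l,\dots,m\}\}$; its logical qubit $t$ corresponds to $X$-logical $x_1\cdots x_{l-1}x_{l+t-1}$. *)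

theory Defs
  imports Complex_Main
begin

text \<open>Points of F_2^m: extensional functions nat => bool supported on coordinates 1..m.\<close>
definition cube :: "nat \<Rightarrow> (nat \<Rightarrow> bool) set" where
  "cube m = {a. \<forall>i. i \<notin> {1..m} \<longrightarrow> \<not> a i}"

text \<open>Binary words indexed by the points of F_2^m (qubit configurations), zero outside the cube.\<close>
type_synonym word = "(nat \<Rightarrow> bool) \<Rightarrow> bool"

definition ev :: "nat \<Rightarrow> ((nat \<Rightarrow> bool) \<Rightarrow> bool) \<Rightarrow> word" where
  "ev m f = (\<lambda>a. a \<in> cube m \<and> f a)"

definition mono :: "nat set \<Rightarrow> (nat \<Rightarrow> bool) \<Rightarrow> bool" where
  "mono S = (\<lambda>a. \<forall>i\<in>S. a i)"

definition wadd :: "word \<Rightarrow> word \<Rightarrow> word" where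
  "wadd u v = (\<lambda>a. u a \<noteq> v a)"

definition xsum :: "'b set \<Rightarrow> ('b \<Rightarrow> word) \<Rightarrow> word" where
  "xsum T f = (\<lambda>a. odd (card {s\<in>T. f s a}))"

definition RM :: "nat \<Rightarrow> nat \<Rightarrow> word set" where
  "RM r m = {xsum T (\<lambda>S. ev m (mono S)) | T. T \<subseteq> {S. S \<subseteq> {1..m} \<and> card S \<le> r}}"

text \<open>Row t (t = 1..l+1) of L_X: ev(x_1 ... x_{l-1} x_{l+t-1}).\<close>
definition LX_row :: "nat \<Rightarrow> nat \<Rightarrow> word" where
  "LX_row l t = ev (2*l) (mono ({1..l-1} \<union> {l+t-1}))"

definition cLX :: "nat \<Rightarrow> (nat \<Rightarrow> bool) \<Rightarrow> word" where
  "cLX l c = xsum {t\<in>{1..l+1}. c t} (LX_row l)"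

text \<open>Unnormalised logical state |c>_L = sum over s in rs(H_X) = RM(l-1,2l) of |cL_X + s>,
  as an amplitude function on computational basis states.\<close>
definition logical_state :: "nat \<Rightarrow> (nat \<Rightarrow> bool) \<Rightarrow> word \<Rightarrow> complex" where
  "logical_state l c = (\<lambda>v. if v \<in> {wadd (cLX l c) s | s. s \<in> RM (l-1) (2*l)} then 1 else 0)"

definition codespace :: "nat \<Rightarrow> (word \<Rightarrow> complex) set" where
  "codespace l = {\<psi>. \<exists>\<alpha>. \<psi> = (\<lambda>v. \<Sum>c\<in>cube (l+1). \<alpha> c * logical_state l c v)}"

definition F_phase :: "nat \<Rightarrow> ((nat \<Rightarrow> bool) \<Rightarrow> (nat \<Rightarrow> bool)) \<Rightarrow> word \<Rightarrow> complex" where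
  "F_phase m \<tau> v =
     (\<Prod>a\<in>{a\<in>cube m. \<tau> a = a}. if v a then \<i> else 1) *
     (\<Prod>p\<in>{{a, \<tau> a} | a. a \<in> cube m \<and> \<tau> a \<noteq> a}. if (\<forall>x\<in>p. v x) then -1 else 1)"

definition F_circ :: "nat \<Rightarrow> ((nat \<Rightarrow> bool) \<Rightarrow> (nat \<Rightarrow> bool)) \<Rightarrow> (word \<Rightarrow> complex) \<Rightarrow> (word \<Rightarrow> complex)" where
  "F_circ m \<tau> \<psi> = (\<lambda>v. F_phase m \<tau> v * \<psi> v)"

definition tau_SS :: "nat \<Rightarrow> (nat \<Rightarrow> bool) \<Rightarrow> (nat \<Rightarrow> bool)" where
  "tau_SS l a = (\<lambda>i. i \<in> {1..2*l} \<and> \<not> a (2*l+1-i))"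

definition tau_CZ :: "nat \<Rightarrow> (nat \<Rightarrow> bool) \<Rightarrow> (nat \<Rightarrow> bool)" where
  "tau_CZ l a = (\<lambda>i. i \<in> {1..2*l} \<and>
      (if i = l \<or> i = l+1 then \<not> a i else \<not> a (2*l+1-i)))"

end

theory Submission
  imports Defs
begin

lemma finite_cube: "finite (cube m)"
proof -
  have "cube m \<subseteq> (\<lambda>S i. i \<in> S) ` Pow {1..m}"
  proof
    fix a assume "a \<in> cube m"
    hence "a = (\<lambda>i. i \<in> {i\<in>{1..m}. a i})" by (auto simp: cube_def)
    thus "a \<in> (\<lambda>S i. i \<in> S) ` Pow {1..m}" by blast
  qed
  thus ?thesis by (rule finite_subset) simp
qed

definition tsig :: "nat \<Rightarrow> (nat \<Rightarrow> nat) \<Rightarrow> (nat \<Rightarrow> bool) \<Rightarrow> (nat \<Rightarrow> bool)" where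
  "tsig m \<sigma> a = (\<lambda>i. i \<in> {1..m} \<and> \<not> a (\<sigma> i))"

definition invo :: "nat \<Rightarrow> (nat \<Rightarrow> nat) \<Rightarrow> bool" where
  "invo m \<sigma> = (\<forall>i\<in>{1..m}. \<sigma> i \<in> {1..m} \<and> \<sigma> (\<sigma> i) = i)"

definition Bw :: "nat \<Rightarrow> ((nat \<Rightarrow> bool) \<Rightarrow> (nat \<Rightarrow> bool)) \<Rightarrow> word \<Rightarrow> word \<Rightarrow> int" where
  "Bw m \<tau> f g = (\<Sum>a\<in>cube m. of_bool (f a \<and> g (\<tau> a)))"

definition isinv :: "nat \<Rightarrow> ((nat \<Rightarrow> bool) \<Rightarrow> (nat \<Rightarrow> bool)) \<Rightarrow> bool" where
  "isinv m \<tau> = (\<forall>a\<in>cube m. \<tau> a \<in> cube m \<and> \<tau> (\<tau> a) = a)"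

lemma tsig_isinv: assumes "invo m \<sigma>" shows "isinv m (tsig m \<sigma>)"
  unfolding isinv_def
proof
  fix a assume a: "a \<in> cube m"
  show "tsig m \<sigma> a \<in> cube m \<and> tsig m \<sigma> (tsig m \<sigma> a) = a"
  proof
    show "tsig m \<sigma> a \<in> cube m" by (auto simp: cube_def tsig_def)
    show "tsig m \<sigma> (tsig m \<sigma> a) = a"
    proof
      fix i show "tsig m \<sigma> (tsig m \<sigma> a) i = a i"
        using a assms by (cases "i \<in> {1..m}") (auto simp: cube_def tsig_def invo_def)
    qed
  qed
qed

lemma sum_swap0:
  assumes "isinv m \<tau>"
  shows "(\<Sum>a\<in>cube m. (h a (\<tau> a) - h (\<tau> a) a :: int)) = 0"
proof -
  have bij: "bij_betw \<tau> (cube m) (cube m)"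
    by (rule bij_betw_byWitness[where f'=\<tau>]) (use assms in \<open>auto simp: isinv_def\<close>)
  have "(\<Sum>a\<in>cube m. h (\<tau> (\<tau> a)) (\<tau> a)) = (\<Sum>a\<in>cube m. h (\<tau> a) a)"
    using sum.reindex_bij_betw[OF bij, of "\<lambda>a. h (\<tau> a) a"] by simp
  moreover have "(\<Sum>a\<in>cube m. h (\<tau> (\<tau> a)) (\<tau> a)) = (\<Sum>a\<in>cube m. h a (\<tau> a))"
    by (rule sum.cong) (use assms in \<open>auto simp: isinv_def\<close>)
  ultimately show ?thesis by (simp add: sum_subtractf)
qed

lemma Q_add:
  assumes "isinv m \<tau>"
  shows "4 dvd (Bw m \<tau> (wadd f g) (wadd f g) - Bw m \<tau> f f - Bw m \<tau> g g - 2 * Bw m \<tau> f g)"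
proof -
  define x where "x a = (of_bool (f a) :: int)" for a
  define y where "y a = (of_bool (g a) :: int)" for a
  define h1 where "h1 p q = y p * x q" for p q
  define h2 where "h2 p q = x p * y p * x q" for p q
  define h3 where "h3 p q = x p * y p * y q" for p q
  define E where "E a = x a * y a * x (\<tau> a) * y (\<tau> a) - x a * y a * x (\<tau> a) - x a * y a * y (\<tau> a)" for a
  have pt: "of_bool (wadd f g a \<and> wadd f g (\<tau> a)) - of_bool (f a \<and> f (\<tau> a)) - of_bool (g a \<and> g (\<tau> a))
      - 2 * of_bool (f a \<and> g (\<tau> a))
    = (h1 a (\<tau> a) - h1 (\<tau> a) a) + 2 * (h2 a (\<tau> a) - h2 (\<tau> a) a) + 2 * (h3 a (\<tau> a) - h3 (\<tau> a) a)
      + 4 * E a" for a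
    unfolding h1_def h2_def h3_def E_def x_def y_def wadd_def
    by (cases "f a"; cases "g a"; cases "f (\<tau> a)"; cases "g (\<tau> a)") simp_all
  have "Bw m \<tau> (wadd f g) (wadd f g) - Bw m \<tau> f f - Bw m \<tau> g g - 2 * Bw m \<tau> f g
     = (\<Sum>a\<in>cube m. (h1 a (\<tau> a) - h1 (\<tau> a) a) + 2 * (h2 a (\<tau> a) - h2 (\<tau> a) a) + 2 * (h3 a (\<tau> a) - h3 (\<tau> a) a)
      + 4 * E a)"
    unfolding Bw_def pt[symmetric] by (simp add: sum_subtractf sum_distrib_left)
  also have "\<dots> = (\<Sum>a\<in>cube m. (h1 a (\<tau> a) - h1 (\<tau> a) a)) + 2 * (\<Sum>a\<in>cube m. (h2 a (\<tau> a) - h2 (\<tau> a) a))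
     + 2 * (\<Sum>a\<in>cube m. (h3 a (\<tau> a) - h3 (\<tau> a) a)) + 4 * (\<Sum>a\<in>cube m. E a)"
    by (simp only: sum.distrib sum_distrib_left)
  also have "\<dots> = 4 * (\<Sum>a\<in>cube m. E a)"
    using sum_swap0[OF assms, of h1] sum_swap0[OF assms, of h2] sum_swap0[OF assms, of h3]
    by simp
  finally show ?thesis by simp
qed

lemma B_add_left:
  "2 dvd (Bw m \<tau> (wadd f g) h - Bw m \<tau> f h - Bw m \<tau> g h)"
proof -
  have "Bw m \<tau> (wadd f g) h - Bw m \<tau> f h - Bw m \<tau> g h = 2 * (\<Sum>a\<in>cube m. - of_bool (f a \<and> g a \<and> h (\<tau> a)))"
    unfolding Bw_def sum_distrib_left sum_subtractf[symmetric]
    by (rule sum.cong) (auto simp: wadd_def)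
  thus ?thesis by simp
qed

lemma B_add_right:
  "2 dvd (Bw m \<tau> h (wadd f g) - Bw m \<tau> h f - Bw m \<tau> h g)"
proof -
  have "Bw m \<tau> h (wadd f g) - Bw m \<tau> h f - Bw m \<tau> h g = 2 * (\<Sum>a\<in>cube m. - of_bool (h a \<and> f (\<tau> a) \<and> g (\<tau> a)))"
    unfolding Bw_def sum_distrib_left sum_subtractf[symmetric]
    by (rule sum.cong) (auto simp: wadd_def)
  thus ?thesis by simp
qed

lemma xsum_empty[simp]: "xsum {} \<phi> = (\<lambda>_. False)"
  by (simp add: xsum_def)

lemma xsum_insert:
  assumes "finite T" "s \<notin> T"
  shows "xsum (insert s T) \<phi> = wadd (\<phi> s) (xsum T \<phi>)"
proof
  fix a
  have "{t\<in>insert s T. \<phi> t a} = (if \<phi> s a then insert s {t\<in>T. \<phi> t a} else {t\<in>T. \<phi> t a})"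
    by auto
  thus "xsum (insert s T) \<phi> a = wadd (\<phi> s) (xsum T \<phi>) a"
    using assms by (simp add: xsum_def wadd_def)
qed

lemma xsum_union:
  assumes "finite T1" "finite T2" "T1 \<inter> T2 = {}"
  shows "xsum (T1 \<union> T2) \<phi> = wadd (xsum T1 \<phi>) (xsum T2 \<phi>)"
proof
  fix a
  have "{t\<in>T1 \<union> T2. \<phi> t a} = {t\<in>T1. \<phi> t a} \<union> {t\<in>T2. \<phi> t a}" by auto
  moreover have "card ({t\<in>T1. \<phi> t a} \<union> {t\<in>T2. \<phi> t a}) = card {t\<in>T1. \<phi> t a} + card {t\<in>T2. \<phi> t a}"
    by (rule card_Un_disjoint) (use assms in auto)
  ultimately show "xsum (T1 \<union> T2) \<phi> a = wadd (xsum T1 \<phi>) (xsum T2 \<phi>) a"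
    by (simp add: xsum_def wadd_def)
qed

lemma xsum_single[simp]: "xsum {s} \<phi> = \<phi> s"
proof
  fix x
  have "{sa\<in>{s}. \<phi> sa x} = (if \<phi> s x then {s} else {})" by auto
  thus "xsum {s} \<phi> x = \<phi> s x" by (simp add: xsum_def)
qed

lemma Bw_zero[simp]: "Bw m \<tau> (\<lambda>_. False) g = 0" "Bw m \<tau> f (\<lambda>_. False) = 0"
  by (simp_all add: Bw_def)

lemma G1r:
  assumes "finite T" "\<forall>t\<in>T. 2 dvd Bw m \<tau> f (\<psi> t)"
  shows "2 dvd Bw m \<tau> f (xsum T \<psi>)"
  using assms
proof (induction T rule: finite_induct)
  case empty then show ?case by simp
next
  case (insert s T)
  have "2 dvd (Bw m \<tau> f (wadd (\<psi> s) (xsum T \<psi>)) - Bw m \<tau> f (\<psi> s) - Bw m \<tau> f (xsum T \<psi>))"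
    by (rule B_add_right)
  then show ?case using insert by (simp add: xsum_insert)
qed

lemma G1:
  assumes "finite T1" "finite T2" "\<forall>s\<in>T1. \<forall>t\<in>T2. 2 dvd Bw m \<tau> (\<phi> s) (\<psi> t)"
  shows "2 dvd Bw m \<tau> (xsum T1 \<phi>) (xsum T2 \<psi>)"
  using assms
proof (induction T1 rule: finite_induct)
  case empty then show ?case by simp
next
  case (insert s T)
  have "2 dvd (Bw m \<tau> (wadd (\<phi> s) (xsum T \<phi>)) (xsum T2 \<psi>) - Bw m \<tau> (\<phi> s) (xsum T2 \<psi>) - Bw m \<tau> (xsum T \<phi>) (xsum T2 \<psi>))"
    by (rule B_add_left)
  moreover have "2 dvd Bw m \<tau> (\<phi> s) (xsum T2 \<psi>)" using insert by (intro G1r) auto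
  ultimately show ?case using insert by (simp add: xsum_insert)
qed

lemma G2:
  assumes "isinv m \<tau>" "finite T" "\<forall>s\<in>T. 4 dvd Bw m \<tau> (\<phi> s) (\<phi> s)"
    "\<forall>s\<in>T. \<forall>t\<in>T. 2 dvd Bw m \<tau> (\<phi> s) (\<phi> t)"
  shows "4 dvd Bw m \<tau> (xsum T \<phi>) (xsum T \<phi>)"
  using assms(2-)
proof (induction T rule: finite_induct)
  case empty then show ?case by simp
next
  case (insert s T)
  have a: "4 dvd (Bw m \<tau> (wadd (\<phi> s) (xsum T \<phi>)) (wadd (\<phi> s) (xsum T \<phi>)) - Bw m \<tau> (\<phi> s) (\<phi> s)
       - Bw m \<tau> (xsum T \<phi>) (xsum T \<phi>) - 2 * Bw m \<tau> (\<phi> s) (xsum T \<phi>))"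
    by (rule Q_add[OF assms(1)])
  have "2 dvd Bw m \<tau> (\<phi> s) (xsum T \<phi>)" using insert by (intro G1r) auto
  hence b: "4 dvd 2 * Bw m \<tau> (\<phi> s) (xsum T \<phi>)" by (metis mult_dvd_mono dvd_refl numeral_Bit0_eq_double mult_2)
  have "4 dvd Bw m \<tau> (\<phi> s) (\<phi> s)" "4 dvd Bw m \<tau> (xsum T \<phi>) (xsum T \<phi>)" using insert by auto
  then show ?case using insert a b by (simp add: xsum_insert) (metis dvd_add dvd_diff diff_add_cancel)
qed

lemma subcube_card:
  assumes "A \<subseteq> {1..m}" "Z \<subseteq> {1..m}" "A \<inter> Z = {}"
  shows "card {a\<in>cube m. (\<forall>i\<in>A. a i) \<and> (\<forall>j\<in>Z. \<not> a j)} = 2 ^ (m - card (A \<union> Z))"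
proof -
  define R where "R = {1..m} - (A \<union> Z)"
  define X where "X = {a\<in>cube m. (\<forall>i\<in>A. a i) \<and> (\<forall>j\<in>Z. \<not> a j)}"
  have "bij_betw (\<lambda>a. {i\<in>R. a i}) X (Pow R)"
  proof (rule bij_betw_byWitness[where f'="\<lambda>U i. i \<in> A \<or> i \<in> U"])
    show "\<forall>a\<in>X. (\<lambda>i. i \<in> A \<or> i \<in> {i \<in> R. a i}) = a"
    proof
      fix a assume a: "a \<in> X"
      show "(\<lambda>i. i \<in> A \<or> i \<in> {i \<in> R. a i}) = a"
      proof
        fix i show "(i \<in> A \<or> i \<in> {i \<in> R. a i}) = a i"
          using a by (cases "i \<in> {1..m}") (auto simp: X_def R_def cube_def)
      qed
    qed
    show "\<forall>U\<in>Pow R. {i \<in> R. i \<in> A \<or> i \<in> U} = U" by (auto simp: R_def)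
    show "(\<lambda>a. {i \<in> R. a i}) ` X \<subseteq> Pow R" by auto
    show "(\<lambda>U i. i \<in> A \<or> i \<in> U) ` Pow R \<subseteq> X"
      using assms by (auto simp: R_def X_def cube_def)
  qed
  hence "card X = card (Pow R)" by (rule bij_betw_same_card)
  also have "\<dots> = 2 ^ card R" by (simp add: R_def card_Pow)
  also have "card R = m - card (A \<union> Z)"
    unfolding R_def using assms by (subst card_Diff_subset) (auto intro: finite_subset)
  finally show ?thesis by (simp add: X_def)
qed

lemma subcube_empty:
  assumes "x \<in> A" "x \<in> Z"
  shows "{a\<in>cube m. (\<forall>i\<in>A. a i) \<and> (\<forall>j\<in>Z. \<not> a j)} = {}"
  using assms by auto

lemma Bw_mono:
  assumes "S \<subseteq> {1..m}" "T \<subseteq> {1..m}"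
  shows "Bw m (tsig m \<sigma>) (ev m (mono S)) (ev m (mono T))
       = int (card {a\<in>cube m. (\<forall>i\<in>S. a i) \<and> (\<forall>j\<in>\<sigma>`T. \<not> a j)})"
proof -
  have "Bw m (tsig m \<sigma>) (ev m (mono S)) (ev m (mono T))
      = int (card (cube m \<inter> {a. ev m (mono S) a \<and> ev m (mono T) (tsig m \<sigma> a)}))"
    unfolding Bw_def by (simp add: finite_cube)
  also have "cube m \<inter> {a. ev m (mono S) a \<and> ev m (mono T) (tsig m \<sigma> a)}
      = {a\<in>cube m. (\<forall>i\<in>S. a i) \<and> (\<forall>j\<in>\<sigma>`T. \<not> a j)}"
  proof -
    have "tsig m \<sigma> a \<in> cube m" for a by (auto simp: cube_def tsig_def)
    thus ?thesis using assms by (auto simp: ev_def mono_def tsig_def)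
  qed
  finally show ?thesis .
qed

lemma Bw_mono_dvd:
  assumes "invo m \<sigma>" "S \<subseteq> {1..m}" "T \<subseteq> {1..m}" "card S + card T + k \<le> m"
  shows "(2::int) ^ k dvd Bw m (tsig m \<sigma>) (ev m (mono S)) (ev m (mono T))"
proof (cases "S \<inter> \<sigma>`T = {}")
  case True
  have sT: "\<sigma>`T \<subseteq> {1..m}" using assms(1,3) by (auto simp: invo_def)
  have fin: "finite S" "finite T" using assms(2,3) by (auto intro: finite_subset)
  have "card (S \<union> \<sigma>`T) \<le> card S + card (\<sigma>`T)" by (rule card_Un_le)
  also have "card (\<sigma>`T) \<le> card T" using fin(2) by (rule card_image_le)
  finally have "k \<le> m - card (S \<union> \<sigma>`T)" using assms(4) by linarith
  hence "(2::int) ^ k dvd 2 ^ (m - card (S \<union> \<sigma>`T))" by (rule le_imp_power_dvd)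
  then show ?thesis
    using subcube_card[OF assms(2) sT True] Bw_mono[OF assms(2,3)] by simp
next
  case False
  then obtain x where "x \<in> S" "x \<in> \<sigma>`T" by blast
  hence E: "{a\<in>cube m. (\<forall>i\<in>S. a i) \<and> (\<forall>j\<in>\<sigma>`T. \<not> a j)} = {}" by (rule subcube_empty)
  have "Bw m (tsig m \<sigma>) (ev m (mono S)) (ev m (mono T)) = int (card ({}::(nat \<Rightarrow> bool) set))"
    by (simp only: Bw_mono[OF assms(2,3)] E)
  then show ?thesis by simp
qed

lemma F_phase_eq:
  assumes inv: "isinv m \<tau>"
  shows "F_phase m \<tau> v = \<i> ^ card {a\<in>cube m. v a \<and> v (\<tau> a)}"
proof -
  define Fx where "Fx = {a\<in>cube m. \<tau> a = a}"
  define P where "P = {{a, \<tau> a} | a. a \<in> cube m \<and> \<tau> a \<noteq> a}"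
  define Pv where "Pv = {p\<in>P. \<forall>x\<in>p. v x}"
  have fc: "finite (cube m)" by (rule finite_cube)
  have finFx: "finite Fx" using fc by (simp add: Fx_def)
  have "P = (\<lambda>a. {a, \<tau> a}) ` {a\<in>cube m. \<tau> a \<noteq> a}" by (auto simp: P_def)
  hence finP: "finite P" using fc by simp
  hence finPv: "finite Pv" by (simp add: Pv_def)
  have t1: "(\<Prod>a\<in>Fx. if v a then \<i> else 1) = \<i> ^ card {a\<in>Fx. v a}"
    using prod.inter_filter[OF finFx, of "\<lambda>_. \<i>" v] by simp
  have t2: "(\<Prod>p\<in>P. if (\<forall>x\<in>p. v x) then -1 else 1) = (-1::complex) ^ card Pv"
    using prod.inter_filter[OF finP, of "\<lambda>_. -1::complex" "\<lambda>p. \<forall>x\<in>p. v x"] by (simp add: Pv_def)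
  have tc: "\<tau> a \<in> cube m" "\<tau> (\<tau> a) = a" if "a \<in> cube m" for a using inv that by (auto simp: isinv_def)
  have W: "{a\<in>cube m. v a \<and> v (\<tau> a)} = {a\<in>Fx. v a} \<union> \<Union>Pv"
  proof
    show "{a\<in>cube m. v a \<and> v (\<tau> a)} \<subseteq> {a\<in>Fx. v a} \<union> \<Union>Pv"
    proof
      fix a assume a: "a \<in> {a\<in>cube m. v a \<and> v (\<tau> a)}"
      show "a \<in> {a\<in>Fx. v a} \<union> \<Union>Pv"
      proof (cases "\<tau> a = a")
        case True then show ?thesis using a by (auto simp: Fx_def)
      next
        case False
        hence "{a, \<tau> a} \<in> Pv" using a by (auto simp: Pv_def P_def)
        then show ?thesis by blast
      qed
    qed
    show "{a\<in>Fx. v a} \<union> \<Union>Pv \<subseteq> {a\<in>cube m. v a \<and> v (\<tau> a)}"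
      using tc by (auto simp: Fx_def Pv_def P_def)
  qed
  have disj: "{a\<in>Fx. v a} \<inter> \<Union>Pv = {}"
    using tc by (auto simp: Fx_def Pv_def P_def)
  have pw: "pairwise disjnt Pv"
    unfolding pairwise_def disjnt_def
  proof (intro ballI impI)
    fix p q assume "p \<in> Pv" "q \<in> Pv" "p \<noteq> q"
    then obtain a b where ab: "p = {a, \<tau> a}" "q = {b, \<tau> b}" "a \<in> cube m" "b \<in> cube m"
      by (auto simp: Pv_def P_def)
    show "p \<inter> q = {}"
    proof (rule ccontr)
      assume "p \<inter> q \<noteq> {}"
      then obtain x where "x \<in> p" "x \<in> q" by blast
      have key: "{c, \<tau> c} = {x, \<tau> x}" if "x \<in> {c, \<tau> c}" "c \<in> cube m" for c
      proof (cases "x = c")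
        case True then show ?thesis by simp
      next
        case False then have "x = \<tau> c" using that by simp
        then show ?thesis using tc(2)[OF that(2)] by auto
      qed
      have "p = q" using key[of a] key[of b] ab \<open>x \<in> p\<close> \<open>x \<in> q\<close> by simp
      thus False using \<open>p \<noteq> q\<close> by simp
    qed
  qed
  have c2: "card p = 2" if "p \<in> Pv" for p using that by (auto simp: Pv_def P_def)
  have fp: "finite p" if "p \<in> Pv" for p using that by (auto simp: Pv_def P_def)
  have "card (\<Union>Pv) = sum card Pv" using card_Union_disjoint[OF pw fp] by simp
  also have "\<dots> = 2 * card Pv" using c2 by simp
  finally have cU: "card (\<Union>Pv) = 2 * card Pv" .
  have "card {a\<in>cube m. v a \<and> v (\<tau> a)} = card {a\<in>Fx. v a} + card (\<Union>Pv)"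
    unfolding W using disj finFx finPv fp by (intro card_Un_disjoint) auto
  hence "\<i> ^ card {a\<in>cube m. v a \<and> v (\<tau> a)} = \<i> ^ card {a\<in>Fx. v a} * (\<i>^2) ^ card Pv"
    using cU by (simp add: power_add power_mult)
  also have "\<dots> = F_phase m \<tau> v"
    unfolding F_phase_def using t1 t2 by (simp add: Fx_def P_def)
  finally show ?thesis by simp
qed

definition Sr :: "nat \<Rightarrow> nat \<Rightarrow> nat set" where
  "Sr l t = {1..l-1} \<union> {l+t-1}"

lemma LX_row_Sr: "LX_row l = (\<lambda>t. ev (2*l) (mono (Sr l t)))"
  by (simp add: LX_row_def Sr_def fun_eq_iff)

lemma Sr_sub: "l \<ge> 1 \<Longrightarrow> t \<in> {1..l+1} \<Longrightarrow> Sr l t \<subseteq> {1..2*l}"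
  by (auto simp: Sr_def)

lemma Sr_card: "l \<ge> 1 \<Longrightarrow> card (Sr l t) \<le> l"
proof -
  assume "l \<ge> 1"
  have "card (Sr l t) \<le> card {1..l-1} + card {l+t-1}" unfolding Sr_def by (rule card_Un_le)
  thus "card (Sr l t) \<le> l" using \<open>l \<ge> 1\<close> by simp
qed

lemma RM_fin: "T \<subseteq> {S. S \<subseteq> {1..(m::nat)} \<and> card S \<le> r} \<Longrightarrow> finite T"
  by (rule finite_subset[of _ "Pow {1..m}"]) auto

lemma dvd3: "(n::int) dvd a - b - c - d \<Longrightarrow> n dvd c \<Longrightarrow> n dvd d \<Longrightarrow> n dvd a - b"
proof -
  assume h: "n dvd a - b - c - d" "n dvd c" "n dvd d"
  have "a - b = (a - b - c - d) + c + d" by simp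
  thus "n dvd a - b" using h by (metis dvd_add)
qed

lemma dvd_sub_trans: "(n::int) dvd a - b \<Longrightarrow> n dvd b - c \<Longrightarrow> n dvd a - c"
proof -
  assume h: "n dvd a - b" "n dvd b - c"
  have "a - c = (a - b) + (b - c)" by simp
  thus "n dvd a - c" using dvd_add[OF h] by simp
qed

lemma dvd_2x: "(2::int) dvd x \<Longrightarrow> 4 dvd 2 * x"
proof -
  assume "2 dvd x"
  then obtain k where "x = 2 * k" by (elim dvdE)
  hence "2 * x = 4 * k" by simp
  thus "4 dvd 2 * x" by simp
qed

lemma core:
  assumes l: "l \<ge> 1" and inv: "invo (2*l) \<sigma>" and c: "c \<in> cube (l+1)" and s: "s \<in> RM (l-1) (2*l)"
  shows "4 dvd (Bw (2*l) (tsig (2*l) \<sigma>) (wadd (cLX l c) s) (wadd (cLX l c) s)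
           - Bw (2*l) (tsig (2*l) \<sigma>) (cLX l c) (cLX l c))"
proof -
  let ?m = "2*l" and ?\<tau> = "tsig (2*l) \<sigma>"
  have iv: "isinv ?m ?\<tau>" by (rule tsig_isinv[OF inv])
  obtain T where T: "T \<subseteq> {S. S \<subseteq> {1..?m} \<and> card S \<le> l-1}" and sT: "s = xsum T (\<lambda>S. ev ?m (mono S))"
    using s by (auto simp: RM_def)
  have fT: "finite T" using T by (rule RM_fin)
  define C where "C = {t\<in>{1..l+1}. c t}"
  have fC: "finite C" by (simp add: C_def)
  have u: "cLX l c = xsum C (\<lambda>t. ev ?m (mono (Sr l t)))"
    by (simp add: cLX_def C_def LX_row_Sr)
  have Qs: "4 dvd Bw ?m ?\<tau> s s"
    unfolding sT
  proof (rule G2[OF iv fT]; intro ballI)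
    fix S assume "S \<in> T"
    hence "S \<subseteq> {1..?m}" "card S \<le> l-1" using T by auto
    thus "4 dvd Bw ?m ?\<tau> (ev ?m (mono S)) (ev ?m (mono S))"
      using Bw_mono_dvd[OF inv, of S S 2] l by simp
  next
    fix S S' assume "S \<in> T" "S' \<in> T"
    hence "S \<subseteq> {1..?m}" "card S \<le> l-1" "S' \<subseteq> {1..?m}" "card S' \<le> l-1" using T by auto
    thus "2 dvd Bw ?m ?\<tau> (ev ?m (mono S)) (ev ?m (mono S'))"
      using Bw_mono_dvd[OF inv, of S S' 1] l by simp
  qed
  have Bus: "2 dvd Bw ?m ?\<tau> (cLX l c) s"
    unfolding u sT
  proof (rule G1[OF fC fT]; intro ballI)
    fix t S assume "t \<in> C" "S \<in> T"
    hence "S \<subseteq> {1..?m}" "card S \<le> l-1" "Sr l t \<subseteq> {1..?m}" using T Sr_sub[OF l, of t] by (auto simp: C_def)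
    thus "2 dvd Bw ?m ?\<tau> (ev ?m (mono (Sr l t))) (ev ?m (mono S))"
      using Bw_mono_dvd[OF inv, of "Sr l t" S 1] l Sr_card[OF l, of t] by simp
  qed
  hence b2: "4 dvd 2 * Bw ?m ?\<tau> (cLX l c) s" by (rule dvd_2x)
  show ?thesis by (rule dvd3[OF Q_add[OF iv, of "cLX l c" s] Qs b2])
qed

lemma image_invo:
  assumes "invo m \<sigma>" "A \<subseteq> {1..m}"
  shows "\<sigma> ` A = {x\<in>{1..m}. \<sigma> x \<in> A}"
proof
  show "\<sigma> ` A \<subseteq> {x\<in>{1..m}. \<sigma> x \<in> A}" using assms by (auto simp: invo_def)
  show "{x\<in>{1..m}. \<sigma> x \<in> A} \<subseteq> \<sigma> ` A"
  proof
    fix x assume x: "x \<in> {x\<in>{1..m}. \<sigma> x \<in> A}"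
    hence "x = \<sigma> (\<sigma> x)" using assms by (auto simp: invo_def)
    thus "x \<in> \<sigma> ` A" using x by blast
  qed
qed

lemma Bw_one:
  assumes "S \<subseteq> {1..m}" "T \<subseteq> {1..m}" "\<sigma>`T \<subseteq> {1..m}" "S \<inter> \<sigma>`T = {}" "S \<union> \<sigma>`T = {1..m}"
  shows "Bw m (tsig m \<sigma>) (ev m (mono S)) (ev m (mono T)) = 1"
  using Bw_mono[OF assms(1,2), of \<sigma>] subcube_card[OF assms(1,3,4)] assms(5) by simp

lemma Bw_zero2:
  assumes "S \<subseteq> {1..m}" "T \<subseteq> {1..m}" "x \<in> S" "x \<in> \<sigma>`T"
  shows "Bw m (tsig m \<sigma>) (ev m (mono S)) (ev m (mono T)) = 0"
proof -
  have E: "{a\<in>cube m. (\<forall>i\<in>S. a i) \<and> (\<forall>j\<in>\<sigma>`T. \<not> a j)} = {}" using assms(3,4) by (rule subcube_empty)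
  have "Bw m (tsig m \<sigma>) (ev m (mono S)) (ev m (mono T)) = int (card ({}::(nat \<Rightarrow> bool) set))"
    by (simp only: Bw_mono[OF assms(1,2)] E)
  then show ?thesis by simp
qed

lemma Qu:
  assumes l: "l \<ge> 1" and inv: "invo (2*l) \<sigma>" and hs: "\<forall>t\<in>{3..l+1}. \<sigma> (l+t-1) = l+2-t"
  shows "4 dvd (Bw (2*l) (tsig (2*l) \<sigma>) (cLX l c) (cLX l c)
     - (of_bool (c 1) * Bw (2*l) (tsig (2*l) \<sigma>) (ev (2*l) (mono (Sr l 1))) (ev (2*l) (mono (Sr l 1)))
      + of_bool (c 2) * Bw (2*l) (tsig (2*l) \<sigma>) (ev (2*l) (mono (Sr l 2))) (ev (2*l) (mono (Sr l 2)))
      + 2 * of_bool (c 1 \<and> c 2) * Bw (2*l) (tsig (2*l) \<sigma>) (ev (2*l) (mono (Sr l 1))) (ev (2*l) (mono (Sr l 2)))))"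
proof -
  let ?m = "2*l" and ?\<tau> = "tsig (2*l) \<sigma>"
  define r where "r t = ev ?m (mono (Sr l t))" for t
  have iv: "isinv ?m ?\<tau>" by (rule tsig_isinv[OF inv])
  have Z: "Bw ?m ?\<tau> (r t) (r t') = 0" if "t \<in> {1..l+1}" "t' \<in> {3..l+1}" for t t'
  proof -
    have x1: "l+2-t' \<in> Sr l t" using that by (auto simp: Sr_def)
    have "\<sigma> (l+t'-1) = l+2-t'" using hs that by auto
    moreover have "l+t'-1 \<in> Sr l t'" by (simp add: Sr_def)
    ultimately have x2: "l+2-t' \<in> \<sigma> ` Sr l t'" by (metis imageI)
    have s1: "Sr l t \<subseteq> {1..?m}" "Sr l t' \<subseteq> {1..?m}" using Sr_sub[OF l] that by auto
    show ?thesis unfolding r_def by (rule Bw_zero2[OF s1 x1 x2])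
  qed
  define C1 where "C1 = {t\<in>{1,2}. c t}"
  define C2 where "C2 = {t\<in>{3..l+1}. c t}"
  have CC: "{t\<in>{1..l+1}. c t} = C1 \<union> C2" using l by (auto simp: C1_def C2_def)
  have fin: "finite C1" "finite C2" by (auto simp: C1_def C2_def)
  have u: "cLX l c = wadd (xsum C1 r) (xsum C2 r)"
    unfolding cLX_def CC LX_row_Sr r_def[symmetric]
    by (rule xsum_union) (use fin in \<open>auto simp: C1_def C2_def\<close>)
  have q2: "4 dvd Bw ?m ?\<tau> (xsum C2 r) (xsum C2 r)"
    by (rule G2[OF iv fin(2)]) (use Z l in \<open>auto simp: C2_def\<close>)
  have b12: "2 dvd Bw ?m ?\<tau> (xsum C1 r) (xsum C2 r)"
    by (rule G1[OF fin]) (use Z l in \<open>auto simp: C1_def C2_def\<close>)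
  have s1: "4 dvd Bw ?m ?\<tau> (cLX l c) (cLX l c) - Bw ?m ?\<tau> (xsum C1 r) (xsum C1 r)"
    unfolding u by (rule dvd3[OF Q_add[OF iv, of "xsum C1 r" "xsum C2 r"] q2 dvd_2x[OF b12]])
  have s2: "4 dvd Bw ?m ?\<tau> (xsum C1 r) (xsum C1 r)
     - (of_bool (c 1) * Bw ?m ?\<tau> (r 1) (r 1) + of_bool (c 2) * Bw ?m ?\<tau> (r 2) (r 2)
        + 2 * of_bool (c 1 \<and> c 2) * Bw ?m ?\<tau> (r 1) (r 2))"
  proof (cases "c 1"; cases "c 2")
    assume "c 1" "c 2"
    hence "C1 = insert 1 {2}" by (auto simp: C1_def)
    hence "xsum C1 r = wadd (r 1) (r 2)" by (simp add: xsum_insert)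
    thus ?thesis using Q_add[OF iv, of "r 1" "r 2"] \<open>c 1\<close> \<open>c 2\<close> by (simp add: algebra_simps)
  next
    assume "c 1" "\<not> c 2"
    hence "C1 = {1}" by (auto simp: C1_def)
    thus ?thesis using \<open>c 1\<close> \<open>\<not> c 2\<close> by simp
  next
    assume "\<not> c 1" "c 2"
    hence "C1 = {2}" by (auto simp: C1_def)
    thus ?thesis using \<open>\<not> c 1\<close> \<open>c 2\<close> by simp
  next
    assume "\<not> c 1" "\<not> c 2"
    hence "C1 = {}" by (auto simp: C1_def)
    thus ?thesis using \<open>\<not> c 1\<close> \<open>\<not> c 2\<close> by simp
  qed
  show ?thesis using dvd_sub_trans[OF s1 s2] unfolding r_def .
qed

definition sSS :: "nat \<Rightarrow> nat \<Rightarrow> nat" where "sSS l i = 2*l+1-i"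
definition sCZ :: "nat \<Rightarrow> nat \<Rightarrow> nat" where "sCZ l i = (if i = l \<or> i = l+1 then i else 2*l+1-i)"

lemma invo_SS: "invo (2*l) (sSS l)" by (auto simp: invo_def sSS_def)
lemma invo_CZ: "invo (2*l) (sCZ l)" by (auto simp: invo_def sCZ_def)
lemma tau_SS_eq: "tau_SS l = tsig (2*l) (sSS l)" by (simp add: fun_eq_iff tau_SS_def tsig_def sSS_def)
lemma tau_CZ_eq: "tau_CZ l = tsig (2*l) (sCZ l)" by (simp add: fun_eq_iff tau_CZ_def tsig_def sCZ_def)
lemma hs_SS: "\<forall>t\<in>{3..l+1}. sSS l (l+t-1) = l+2-t" by (auto simp: sSS_def)
lemma hs_CZ: "\<forall>t\<in>{3..l+1}. sCZ l (l+t-1) = l+2-t" by (auto simp: sCZ_def)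

lemma ipow: assumes "4 dvd (int n - int k)" shows "\<i> ^ n = \<i> ^ k"
proof -
  have "int n mod 4 = int k mod 4" using assms by (simp add: mod_eq_dvd_iff)
  hence nk: "n mod 4 = k mod 4" by (metis of_nat_mod of_nat_numeral of_nat_eq_iff)
  have p: "\<i> ^ x = \<i> ^ (x mod 4)" for x
  proof -
    have "\<i> ^ x = \<i> ^ (4 * (x div 4) + x mod 4)" by simp
    also have "\<dots> = (\<i> ^ 4) ^ (x div 4) * \<i> ^ (x mod 4)" by (simp only: power_add power_mult)
    also have "\<dots> = \<i> ^ (x mod 4)" by simp
    finally show ?thesis .
  qed
  show ?thesis using p[of n] p[of k] nk by simp
qed

lemma Bw_card: "Bw m \<tau> v v = int (card {a\<in>cube m. v a \<and> v (\<tau> a)})"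
  unfolding Bw_def by (simp add: finite_cube Int_def)

lemma state_eig:
  assumes "\<forall>s\<in>RM (l-1) (2*l). F_phase m \<tau> (wadd (cLX l c) s) = ph"
  shows "F_circ m \<tau> (logical_state l c) = (\<lambda>v. ph * logical_state l c v)"
proof
  fix v
  show "F_circ m \<tau> (logical_state l c) v = ph * logical_state l c v"
  proof (cases "v \<in> {wadd (cLX l c) s | s. s \<in> RM (l-1) (2*l)}")
    case True
    then obtain s where "s \<in> RM (l-1) (2*l)" "v = wadd (cLX l c) s" by blast
    hence "F_phase m \<tau> v = ph" using assms by simp
    moreover have "logical_state l c v = 1" using True by (simp add: logical_state_def)
    ultimately show ?thesis by (simp add: F_circ_def)
  next
    case False
    hence "logical_state l c v = 0" by (simp add: logical_state_def)
    then show ?thesis by (simp add: F_circ_def)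
  qed
qed

lemma code_pres:
  assumes "\<forall>c\<in>cube (l+1). F_circ m \<tau> (logical_state l c) = (\<lambda>v. ph c * logical_state l c v)"
  shows "\<forall>\<psi>\<in>codespace l. F_circ m \<tau> \<psi> \<in> codespace l"
proof
  fix \<psi> assume "\<psi> \<in> codespace l"
  then obtain \<alpha> where psi: "\<psi> = (\<lambda>v. \<Sum>c\<in>cube (l+1). \<alpha> c * logical_state l c v)"
    by (auto simp: codespace_def)
  have pt: "F_phase m \<tau> v * logical_state l c v = ph c * logical_state l c v" if "c \<in> cube (l+1)" for c v
    using fun_cong[OF assms[rule_format, OF that], of v] by (simp add: F_circ_def)
  have "F_circ m \<tau> \<psi> = (\<lambda>v. \<Sum>c\<in>cube (l+1). (\<alpha> c * ph c) * logical_state l c v)"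
  proof
    fix v
    have "F_circ m \<tau> \<psi> v = (\<Sum>c\<in>cube (l+1). \<alpha> c * (F_phase m \<tau> v * logical_state l c v))"
      by (simp add: F_circ_def psi sum_distrib_left algebra_simps)
    also have "\<dots> = (\<Sum>c\<in>cube (l+1). (\<alpha> c * ph c) * logical_state l c v)"
      by (rule sum.cong) (simp_all add: pt)
    finally show "F_circ m \<tau> \<psi> v = (\<Sum>c\<in>cube (l+1). (\<alpha> c * ph c) * logical_state l c v)" .
  qed
  thus "F_circ m \<tau> \<psi> \<in> codespace l" by (auto simp: codespace_def)
qed

lemma SS_vals:
  assumes l: "l \<ge> 1"
  shows "Bw (2*l) (tsig (2*l) (sSS l)) (ev (2*l) (mono (Sr l 1))) (ev (2*l) (mono (Sr l 1))) = 1"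
    "Bw (2*l) (tsig (2*l) (sSS l)) (ev (2*l) (mono (Sr l 2))) (ev (2*l) (mono (Sr l 2))) = 1"
    "Bw (2*l) (tsig (2*l) (sSS l)) (ev (2*l) (mono (Sr l 1))) (ev (2*l) (mono (Sr l 2))) = 0"
proof -
  have s1: "Sr l 1 \<subseteq> {1..2*l}" and s2: "Sr l 2 \<subseteq> {1..2*l}" using Sr_sub[OF l] l by auto
  have i1: "sSS l ` Sr l 1 = {x\<in>{1..2*l}. sSS l x \<in> Sr l 1}" by (rule image_invo[OF invo_SS s1])
  have i2: "sSS l ` Sr l 2 = {x\<in>{1..2*l}. sSS l x \<in> Sr l 2}" by (rule image_invo[OF invo_SS s2])
  show "Bw (2*l) (tsig (2*l) (sSS l)) (ev (2*l) (mono (Sr l 1))) (ev (2*l) (mono (Sr l 1))) = 1"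
    apply (rule Bw_one[OF s1 s1]) apply (unfold i1) using l by (auto simp: Sr_def sSS_def)
  show "Bw (2*l) (tsig (2*l) (sSS l)) (ev (2*l) (mono (Sr l 2))) (ev (2*l) (mono (Sr l 2))) = 1"
    apply (rule Bw_one[OF s2 s2]) apply (unfold i2) using l by (auto simp: Sr_def sSS_def)
  show "Bw (2*l) (tsig (2*l) (sSS l)) (ev (2*l) (mono (Sr l 1))) (ev (2*l) (mono (Sr l 2))) = 0"
    apply (rule Bw_zero2[OF s1 s2, of l]) apply (unfold i2) using l by (auto simp: Sr_def sSS_def)
qed

lemma CZ_vals:
  assumes l: "l \<ge> 1"
  shows "Bw (2*l) (tsig (2*l) (sCZ l)) (ev (2*l) (mono (Sr l 1))) (ev (2*l) (mono (Sr l 1))) = 0"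
    "Bw (2*l) (tsig (2*l) (sCZ l)) (ev (2*l) (mono (Sr l 2))) (ev (2*l) (mono (Sr l 2))) = 0"
    "Bw (2*l) (tsig (2*l) (sCZ l)) (ev (2*l) (mono (Sr l 1))) (ev (2*l) (mono (Sr l 2))) = 1"
proof -
  have s1: "Sr l 1 \<subseteq> {1..2*l}" and s2: "Sr l 2 \<subseteq> {1..2*l}" using Sr_sub[OF l] l by auto
  have i1: "sCZ l ` Sr l 1 = {x\<in>{1..2*l}. sCZ l x \<in> Sr l 1}" by (rule image_invo[OF invo_CZ s1])
  have i2: "sCZ l ` Sr l 2 = {x\<in>{1..2*l}. sCZ l x \<in> Sr l 2}" by (rule image_invo[OF invo_CZ s2])
  show "Bw (2*l) (tsig (2*l) (sCZ l)) (ev (2*l) (mono (Sr l 1))) (ev (2*l) (mono (Sr l 1))) = 0"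
    apply (rule Bw_zero2[OF s1 s1, of l]) apply (unfold i1) using l by (auto simp: Sr_def sCZ_def)
  show "Bw (2*l) (tsig (2*l) (sCZ l)) (ev (2*l) (mono (Sr l 2))) (ev (2*l) (mono (Sr l 2))) = 0"
    apply (rule Bw_zero2[OF s2 s2, of "l+1"]) apply (unfold i2) using l by (auto simp: Sr_def sCZ_def)
  show "Bw (2*l) (tsig (2*l) (sCZ l)) (ev (2*l) (mono (Sr l 1))) (ev (2*l) (mono (Sr l 2))) = 1"
    apply (rule Bw_one[OF s1 s2]) apply (unfold i2) using l by (auto simp: Sr_def sCZ_def)
qed

lemma eig_SS:
  assumes l: "l \<ge> 1" and c: "c \<in> cube (l+1)"
  shows "F_circ (2*l) (tau_SS l) (logical_state l c)
              = (\<lambda>v. \<i> ^ (of_bool (c 1) + of_bool (c 2)) * logical_state l c v)"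
proof (rule state_eig, intro ballI)
  fix s assume s: "s \<in> RM (l-1) (2*l)"
  let ?\<tau> = "tsig (2*l) (sSS l)"
  define v where "v = wadd (cLX l c) s"
  define n where "n = card {a\<in>cube (2*l). v a \<and> v (?\<tau> a)}"
  have ph: "F_phase (2*l) (tau_SS l) v = \<i> ^ n"
    unfolding tau_SS_eq n_def by (rule F_phase_eq[OF tsig_isinv[OF invo_SS]])
  have bn: "Bw (2*l) ?\<tau> v v = int n" unfolding n_def by (rule Bw_card)
  have d1: "4 dvd Bw (2*l) ?\<tau> v v - Bw (2*l) ?\<tau> (cLX l c) (cLX l c)"
    unfolding v_def by (rule core[OF l invo_SS c s])
  have d2: "4 dvd Bw (2*l) ?\<tau> (cLX l c) (cLX l c) - (of_bool (c 1) + of_bool (c 2))"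
    using Qu[OF l invo_SS hs_SS, of c] SS_vals[OF l] by simp
  have "4 dvd int n - int (of_bool (c 1) + of_bool (c 2))"
    using dvd_sub_trans[OF d1 d2] bn by simp
  hence "\<i> ^ n = \<i> ^ (of_bool (c 1) + of_bool (c 2))" by (rule ipow)
  thus "F_phase (2*l) (tau_SS l) (wadd (cLX l c) s) = \<i> ^ (of_bool (c 1) + of_bool (c 2))"
    using ph by (simp add: v_def)
qed

lemma eig_CZ:
  assumes l: "l \<ge> 1" and c: "c \<in> cube (l+1)"
  shows "F_circ (2*l) (tau_CZ l) (logical_state l c)
              = (\<lambda>v. (if c 1 \<and> c 2 then -1 else 1) * logical_state l c v)"
proof (rule state_eig, intro ballI)
  fix s assume s: "s \<in> RM (l-1) (2*l)"
  let ?\<tau> = "tsig (2*l) (sCZ l)"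
  define v where "v = wadd (cLX l c) s"
  define n where "n = card {a\<in>cube (2*l). v a \<and> v (?\<tau> a)}"
  have ph: "F_phase (2*l) (tau_CZ l) v = \<i> ^ n"
    unfolding tau_CZ_eq n_def by (rule F_phase_eq[OF tsig_isinv[OF invo_CZ]])
  have bn: "Bw (2*l) ?\<tau> v v = int n" unfolding n_def by (rule Bw_card)
  have d1: "4 dvd Bw (2*l) ?\<tau> v v - Bw (2*l) ?\<tau> (cLX l c) (cLX l c)"
    unfolding v_def by (rule core[OF l invo_CZ c s])
  have d2: "4 dvd Bw (2*l) ?\<tau> (cLX l c) (cLX l c) - 2 * of_bool (c 1 \<and> c 2)"
    using Qu[OF l invo_CZ hs_CZ, of c] CZ_vals[OF l] by simp
  have "4 dvd int n - int (2 * of_bool (c 1 \<and> c 2))"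
    using dvd_sub_trans[OF d1 d2] bn by simp
  hence "\<i> ^ n = \<i> ^ (2 * of_bool (c 1 \<and> c 2))" by (rule ipow)
  thus "F_phase (2*l) (tau_CZ l) (wadd (cLX l c) s) = (if c 1 \<and> c 2 then -1 else 1)"
    using ph by (simp add: v_def)
qed

theorem mainTheorem14:
  fixes l :: nat
  assumes "l \<ge> 1"
  shows "(\<forall>\<psi>\<in>codespace l. F_circ (2*l) (tau_SS l) \<psi> \<in> codespace l)
       \<and> (\<forall>c\<in>cube (l+1). F_circ (2*l) (tau_SS l) (logical_state l c)
              = (\<lambda>v. \<i> ^ (of_bool (c 1) + of_bool (c 2)) * logical_state l c v))
       \<and> (\<forall>\<psi>\<in>codespace l. F_circ (2*l) (tau_CZ l) \<psi> \<in> codespace l)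
       \<and> (\<forall>c\<in>cube (l+1). F_circ (2*l) (tau_CZ l) (logical_state l c)
              = (\<lambda>v. (if c 1 \<and> c 2 then -1 else 1) * logical_state l c v))"
proof -
  have A: "\<forall>c\<in>cube (l+1). F_circ (2*l) (tau_SS l) (logical_state l c)
              = (\<lambda>v. \<i> ^ (of_bool (c 1) + of_bool (c 2)) * logical_state l c v)"
    using eig_SS[OF assms] by blast
  have B: "\<forall>c\<in>cube (l+1). F_circ (2*l) (tau_CZ l) (logical_state l c)
              = (\<lambda>v. (if c 1 \<and> c 2 then -1 else 1) * logical_state l c v)"
    using eig_CZ[OF assms] by blast
  show ?thesis
    using A B code_pres[OF A] code_pres[OF B] by blast
qed

end
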